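(* Let $\ell>0$. For any initial datum $S(0)\in\mathbb R_+$ there exists a unique positive solution $S(t)\in\mathbb R_+$ of the ODE $\frac{d}{dt}S(t)=A_\ell(S(t))$. This solution is bounded with continuous first derivative for all $t\ge0$; moreover $\lim_{t\to\infty}S(t)=1$ and $0\le S(t)\le\max\{S(0),1\}$ for all $t\ge0$.
   Context: $\mathbb R_+=\{x\in\mathbb R:x\ge0\}$. With $\Phi$ the standard normal cdf: for $x>0$, $D_\ell(x)=2\ell^2e^{\ell^2(x-1)}\Phi\big(\tfrac{\ell(1-2x)}{\sqrt{2x}}\big)$, $\Gamma_\ell(x)=D_\ell(x)+2\ell^2\Phi\big(-\tfrac{\ell}{\sqrt{2x}}\big)$, $A_\ell(x)=-2xD_\ell(x)+\Gamma_\ell(x)$; and $D_\ell(0)=\Gamma_\ell(0)=A_\ell(0)=2\ell^2e^{-\ell^2}$. *)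

theory Defs
  imports "HOL-Probability.Probability"
begin

definition Phi :: "real \<Rightarrow> real" where
  "Phi x = (LBINT t:{..x}. std_normal_density t)"

definition D_l :: "real \<Rightarrow> real \<Rightarrow> real" where
  "D_l l x = (if x = 0 then 2 * l\<^sup>2 * exp (- l\<^sup>2)
     else 2 * l\<^sup>2 * exp (l\<^sup>2 * (x - 1)) * Phi (l * (1 - 2 * x) / sqrt (2 * x)))"

definition Gamma_l :: "real \<Rightarrow> real \<Rightarrow> real" where
  "Gamma_l l x = (if x = 0 then 2 * l\<^sup>2 * exp (- l\<^sup>2)
     else D_l l x + 2 * l\<^sup>2 * Phi (- l / sqrt (2 * x)))"

definition A_l :: "real \<Rightarrow> real \<Rightarrow> real" where
  "A_l l x = (if x = 0 then 2 * l\<^sup>2 * exp (- l\<^sup>2)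
     else - 2 * x * D_l l x + Gamma_l l x)"

definition is_pos_solution :: "real \<Rightarrow> real \<Rightarrow> (real \<Rightarrow> real) \<Rightarrow> bool" where
  "is_pos_solution l S0 S \<longleftrightarrow> S 0 = S0 \<and>
     (\<forall>t\<ge>0. S t \<ge> 0 \<and> (S has_real_derivative A_l l (S t)) (at t within {0..}))"

end

theory Submission
  imports Defs "HOL-Real_Asymp.Real_Asymp"
begin


locale gen =
  fixes c :: "real \<Rightarrow> real" and L \<delta> :: real
  assumes c_cont: "continuous_on {..<1} c"
    and c_pos: "\<And>y. y < 1 \<Longrightarrow> 0 < c y"
    and L_pos: "0 < L" and d_pos: "0 < \<delta>"
    and c_bnd: "\<And>y. 1 - \<delta> < y \<Longrightarrow> y < 1 \<Longrightarrow> c y \<le> L * (1 - y)"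
begin

definition T :: "real \<Rightarrow> real \<Rightarrow> real" where "T m s = integral {m..s} (\<lambda>y. 1 / c y)"

lemma c_pos': "y \<le> b \<Longrightarrow> b < 1 \<Longrightarrow> 0 < c y"
  using c_pos[of y] by simp

lemma f_cont: assumes "b < 1" shows "continuous_on {m..b} (\<lambda>y. 1 / c y)"
proof -
  have "\<forall>y\<in>{m..b}. c y \<noteq> 0" using c_pos' assms by (metis atLeastAtMost_iff less_irrefl)
  thus ?thesis using assms
    by (intro continuous_on_divide continuous_on_const continuous_on_subset[OF c_cont]) auto
qed

lemma T_eq: "T m = (\<lambda>u. integral {m..u} (\<lambda>y. 1 / c y))"
  by (rule ext) (simp add: T_def)

lemma T_deriv: assumes "m < s" "s < 1" shows "(T m has_real_derivative 1 / c s) (at s)"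
proof -
  define b where "b = (s+1)/2"
  have "((\<lambda>u. integral {m..u} (\<lambda>y. 1 / c y)) has_vector_derivative 1 / c s) (at s within {m..b})"
    using assms by (intro integral_has_vector_derivative f_cont) (auto simp: b_def)
  moreover have "at s within {m..b} = at s" using assms by (intro at_within_Icc_at) (auto simp: b_def)
  ultimately show ?thesis by (simp add: has_real_derivative_iff_has_vector_derivative T_eq)
qed

lemma T_cont: "b < 1 \<Longrightarrow> continuous_on {m..b} (T m)"
  unfolding T_eq by (intro indefinite_integral_continuous_1 integrable_continuous_interval f_cont)

lemma T_nonneg: assumes "m \<le> s" "s < 1" shows "0 \<le> T m s"
  unfolding T_def using assms
proof (intro integral_nonneg integrable_continuous_interval f_cont)
  fix x assume "x \<in> {m..s}"
  thus "0 \<le> 1 / c x" using c_pos'[of x s] assms by auto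
qed (use assms in auto)

lemma T_mm: "T m m = 0" by (simp add: T_def)

lemma T_mono: assumes "m < u" "u < v" "v < 1" shows "T m u < T m v"
proof (rule DERIV_pos_imp_increasing[OF assms(2)])
  fix x assume "u \<le> x" "x \<le> v"
  hence x: "m < x" "x < 1" using assms by auto
  show "\<exists>y. DERIV (T m) x :> y \<and> y > 0"
    using T_deriv[OF x] c_pos[OF x(2)] by (intro exI[of _ "1/c x"]) auto
qed

lemma T_mono_le: assumes "m < u" "u \<le> v" "v < 1" shows "T m u \<le> T m v"
  using T_mono[OF assms(1) _ assms(3)] assms(2) by (cases "u = v") auto

lemma T_pos: assumes "m < s" "s < 1" shows "0 < T m s"
proof -
  have "T m ((m+s)/2) < T m s" using assms by (intro T_mono) auto
  moreover have "0 \<le> T m ((m+s)/2)" using assms by (intro T_nonneg) auto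
  ultimately show ?thesis by linarith
qed

lemma T_inj: assumes "m < s" "s < 1" "m < s'" "s' < 1" "T m s = T m s'" shows "s = s'"
  using T_mono[of m s s'] T_mono[of m s' s] assms by (cases s s' rule: linorder_cases) auto

lemma T_top: assumes "m < 1" shows "filterlim (T m) at_top (at_left 1)"
proof -
  define s1 where "s1 = max ((m+1)/2) (1 - \<delta>/2)"
  have "m < (m+1)/2" "(m+1)/2 < 1" "1 - \<delta> < 1 - \<delta>/2" "1 - \<delta>/2 < 1" using assms d_pos by auto
  hence s1: "m < s1" "s1 < 1" "1 - \<delta> < s1" unfolding s1_def by (auto simp: less_max_iff_disj)
  define h where "h s = T m s + ln (1 - s) / L" for s
  have hmono: "h s1 \<le> h s" if "s1 \<le> s" "s < 1" for s
  proof (rule DERIV_nonneg_imp_increasing_open[OF that(1)])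
    fix x assume x: "s1 < x" "x < s"
    have cx: "0 < c x" "c x \<le> L * (1 - x)" using x s1 that by (auto intro!: c_pos c_bnd)
    have d1: "(T m has_real_derivative 1/c x) (at x)" using x s1 that by (intro T_deriv) auto
    have d2: "((\<lambda>s. ln (1 - s) / L) has_real_derivative (- 1 / (1-x)) / L) (at x)"
      using x that L_pos by (auto intro!: derivative_eq_intros)
    have "(h has_real_derivative 1 / c x - 1 / (L * (1 - x))) (at x)"
    proof -
      have e: "1/c x + (- 1 / (1-x)) / L = 1 / c x - 1 / (L * (1 - x))" by simp
      show ?thesis unfolding h_def using DERIV_add[OF d1 d2] unfolding e .
    qed
    moreover have "1 / (L * (1 - x)) \<le> 1 / c x"
      using cx by (intro divide_left_mono) auto
    ultimately show "\<exists>y. (h has_real_derivative y) (at x) \<and> 0 \<le> y" by auto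
  next
    show "continuous_on {s1..s} h" unfolding h_def using that s1 L_pos
      by (intro continuous_intros continuous_on_subset[OF T_cont[of s m]]) auto
  qed
  show ?thesis unfolding filterlim_at_top
  proof
    fix Z
    define e where "e = min (1 - s1) (exp (L * (h s1 - Z)))"
    have e: "0 < e" using s1 by (auto simp: e_def)
    have "eventually (\<lambda>x. x \<in> {1 - e<..<1}) (at_left (1::real))"
      using e by (intro eventually_at_left_real) auto
    then show "eventually (\<lambda>x. Z \<le> T m x) (at_left 1)"
    proof eventually_elim
      case (elim x)
      hence x: "s1 < x" "x < 1" "1 - x < exp (L * (h s1 - Z))" by (auto simp: e_def)
      have "ln (1 - x) < ln (exp (L * (h s1 - Z)))"
        using x by (subst ln_less_cancel_iff) auto
      hence "ln (1 - x) / L < h s1 - Z" using L_pos by (simp add: pos_divide_less_eq mult.commute)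
      moreover have "h s1 \<le> h x" using hmono[of x] x by auto
      moreover have "h x = T m x + ln (1 - x) / L" by (simp add: h_def)
      ultimately show ?case by linarith
    qed
  qed
qed


lemma exist: assumes r0: "r0 < 1"
  shows "\<exists>R. R 0 = r0 \<and> (\<forall>t\<ge>0. r0 \<le> R t \<and> R t < 1 \<and> (R has_real_derivative c (R t)) (at t)) \<and> (R \<longlongrightarrow> 1) at_top"
proof -
  define m where "m = r0 - 1"
  have m: "m < r0" "m < 1" using r0 by (auto simp: m_def)
  have surj: "\<exists>s. m < s \<and> s < 1 \<and> T m s = y" if y: "0 < y" for y
  proof -
    have "eventually (\<lambda>x. y \<le> T m x) (at_left 1)"
      using T_top[OF m(2)] by (simp add: filterlim_at_top)
    moreover have "eventually (\<lambda>x. x \<in> {m<..<1}) (at_left (1::real))"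
      using m by (intro eventually_at_left_real) auto
    ultimately have "eventually (\<lambda>x. y \<le> T m x \<and> x \<in> {m<..<1}) (at_left (1::real))"
      by eventually_elim auto
    then obtain s2 where s2: "y \<le> T m s2" "m < s2" "s2 < 1"
      using eventually_happens[of _ "at_left (1::real)"] by auto
    obtain s where s: "m \<le> s" "s \<le> s2" "T m s = y"
      using IVT'[of "T m" m y s2] T_cont[OF s2(3), of m] s2 y by (auto simp: T_mm)
    have "s \<noteq> m" using s y by (auto simp: T_mm)
    thus ?thesis using s s2 by (intro exI[of _ s]) auto
  qed
  define Ri where "Ri y = (THE s. m < s \<and> s < 1 \<and> T m s = y)" for y
  have Ri: "m < Ri y \<and> Ri y < 1 \<and> T m (Ri y) = y" if "0 < y" for y
  proof -
    have "\<exists>!s. m < s \<and> s < 1 \<and> T m s = y"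
      using surj[OF that] T_inj[of m] by blast
    thus ?thesis unfolding Ri_def by (rule theI')
  qed
  have RiT: "Ri (T m s) = s" if "m < s" "s < 1" for s
    using Ri[OF T_pos[OF that]] T_inj[of m "Ri (T m s)" s] that by auto
  have Ri_deriv: "(Ri has_real_derivative c (Ri y)) (at y)" if y: "0 < y" for y
  proof -
    define x where "x = Ri y"
    have x: "m < x" "x < 1" "T m x = y" using Ri[OF y] by (auto simp: x_def)
    define d where "d = min (x - m) (1 - x) / 2"
    have d: "0 < d" using x by (auto simp: d_def)
    have "isCont Ri (T m x)"
    proof -
      have z: "m < z \<and> z < 1" if "\<bar>z - x\<bar> \<le> d" for z
      proof -
        have "x - d \<le> z" "z \<le> x + d" using that by (auto simp: abs_le_iff)
        moreover have "d \<le> (x - m) / 2" "d \<le> (1 - x) / 2" by (auto simp: d_def)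
        ultimately show ?thesis using x d by (auto simp: field_simps)
      qed
      show ?thesis
        by (rule isCont_inverse_function[OF d]) (use z RiT T_deriv DERIV_isCont in blast)+
    qed
    hence cont: "isCont Ri y" using x by simp
    have "DERIV Ri y :> inverse (1 / c (Ri y))"
    proof (rule DERIV_inverse_function[where a=0 and b="y+1"])
      show "DERIV (T m) (Ri y) :> 1 / c (Ri y)" using T_deriv x by (auto simp: x_def)
      have "0 < c (Ri y)" using c_pos x by (simp add: x_def)
      thus "1 / c (Ri y) \<noteq> 0" by simp
      show "\<And>z. 0 < z \<Longrightarrow> z < y + 1 \<Longrightarrow> T m (Ri z) = z" using Ri by auto
    qed (use y cont in auto)
    thus ?thesis by simp
  qed
  define t0 where "t0 = T m r0"
  have t0: "0 < t0" using T_pos m r0 by (auto simp: t0_def)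
  define R where "R t = Ri (t + t0)" for t
  have R0: "R 0 = r0" using RiT[of r0] m r0 by (auto simp: R_def t0_def)
  have Rb: "m < R t \<and> R t < 1 \<and> T m (R t) = t + t0" if "0 \<le> t" for t
    using Ri[of "t + t0"] t0 that by (auto simp: R_def)
  have Rge: "r0 \<le> R t" if "0 \<le> t" for t
  proof (rule ccontr)
    assume "\<not> r0 \<le> R t"
    hence "T m (R t) < T m r0" using Rb[OF that] m r0 by (intro T_mono) auto
    thus False using Rb[OF that] that by (auto simp: t0_def)
  qed
  have Rd: "(R has_real_derivative c (R t)) (at t)" if "0 \<le> t" for t
  proof -
    have "((\<lambda>t. Ri (t + t0)) has_real_derivative c (Ri (t + t0)) * 1) (at t)"
      by (rule DERIV_chain2[OF Ri_deriv]) (use t0 that in \<open>auto intro!: derivative_eq_intros\<close>)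
    thus ?thesis by (simp add: R_def[abs_def])
  qed
  have lim: "(R \<longlongrightarrow> 1) at_top"
  proof (rule order_tendstoI)
    fix a :: real assume a: "a < 1"
    define e where "e = (max a r0 + 1) / 2"
    have e: "a < e" "r0 < e" "e < 1" using a r0 by (auto simp: e_def)
    show "eventually (\<lambda>t. a < R t) at_top"
      using eventually_ge_at_top[of "max 0 (T m e)"]
    proof eventually_elim
      case (elim t)
      hence t: "0 \<le> t" "T m e \<le> t" by auto
      have "e < R t"
      proof (rule ccontr)
        assume "\<not> e < R t"
        hence "T m (R t) \<le> T m e" using Rb[OF t(1)] e m by (intro T_mono_le) auto
        thus False using Rb[OF t(1)] t t0 by auto
      qed
      thus ?case using e by auto
    qed
  next
    fix a :: real assume a1: "1 < a"
    show "eventually (\<lambda>t. R t < a) at_top"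
    proof (rule eventually_mono[OF eventually_ge_at_top[of 0]])
      fix t :: real assume "0 \<le> t" thus "R t < a" using Rb[of t] a1 by auto
    qed
  qed
  show ?thesis using R0 Rb Rge Rd lim by (intro exI[of _ R]) auto
qed

lemma T_const: assumes "convex I"
  and u: "\<And>t. t \<in> I \<Longrightarrow> m < u t \<and> u t < 1 \<and> (u has_real_derivative c (u t)) (at t within I)"
  shows "\<exists>K. \<forall>t\<in>I. T m (u t) - t = K"
proof (rule has_field_derivative_zero_constant[OF assms(1)])
  fix t assume t: "t \<in> I"
  have "((\<lambda>t. T m (u t)) has_real_derivative 1 / c (u t) * c (u t)) (at t within I)"
    using u[OF t] by (intro DERIV_chain2[OF T_deriv]) auto
  hence "((\<lambda>t. T m (u t) - t) has_real_derivative 1 / c (u t) * c (u t) - 1) (at t within I)"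
    by (intro DERIV_diff DERIV_ident)
  moreover have "1 / c (u t) * c (u t) - 1 = 0" using c_pos[of "u t"] u[OF t] by simp
  ultimately show "((\<lambda>t. T m (u t) - t) has_real_derivative 0) (at t within I)" by simp
qed

lemma lowb: fixes u :: "real \<Rightarrow> real" assumes "continuous_on {p..q} u" "p \<le> q" shows "\<exists>m. \<forall>t\<in>{p..q}. m < u t"
proof -
  obtain x where "x \<in> {p..q}" "\<forall>y\<in>{p..q}. u x \<le> u y"
    using continuous_attains_inf[of "{p..q}" u] assms by auto
  thus ?thesis by (intro exI[of _ "u x - 1"]) force
qed

lemma endp: assumes pq: "p < q"
  and d: "\<And>t. t \<in> {p..q} \<Longrightarrow> (u has_real_derivative c (u t)) (at t within {p..q})"
  and lt: "\<And>t. p < t \<Longrightarrow> t < q \<Longrightarrow> u t < 1"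
  shows "u p < 1 \<and> u q < 1"
proof -
  have cont: "continuous_on {p..q} u" by (rule DERIV_continuous_on[OF d])
  obtain m where m: "\<And>t. t \<in> {p..q} \<Longrightarrow> m < u t" using lowb[OF cont] pq by force
  have m1: "m < 1" using m[of "(p+q)/2"] lt[of "(p+q)/2"] pq by auto
  obtain K where K: "\<And>t. t \<in> {p<..<q} \<Longrightarrow> T m (u t) - t = K"
  proof -
    have "\<exists>K. \<forall>t\<in>{p<..<q}. T m (u t) - t = K"
    proof (rule T_const)
      fix t assume t: "t \<in> {p<..<q}"
      have "(u has_real_derivative c (u t)) (at t within {p<..<q})"
        by (rule DERIV_subset[OF d]) (use t in auto)
      thus "m < u t \<and> u t < 1 \<and> (u has_real_derivative c (u t)) (at t within {p<..<q})"
        using m[of t] lt[of t] t by auto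
    qed simp
    thus ?thesis using that by blast
  qed
  have bad: False if F: "F \<noteq> bot" "eventually (\<lambda>t. t \<in> {p<..<q}) F" "filterlim u (at_left 1) F" for F
  proof -
    have "filterlim (\<lambda>t. T m (u t)) at_top F" by (rule filterlim_compose[OF T_top[OF m1] F(3)])
    hence "eventually (\<lambda>t. q + K + 1 \<le> T m (u t)) F" by (simp add: filterlim_at_top)
    with F(2) have "eventually (\<lambda>t. False) F"
    proof eventually_elim
      case (elim t) thus ?case using K[of t] by auto
    qed
    thus False using F(1) by (simp add: eventually_False)
  qed
  have ev1: "eventually (\<lambda>t. t \<in> {p<..<q}) (at_right p)" using pq by (rule eventually_at_right_real)
  have ev2: "eventually (\<lambda>t. t \<in> {p<..<q}) (at_left q)" using pq by (rule eventually_at_left_real)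
  have "(u \<longlongrightarrow> u p) (at p within {p..q})" using cont pq by (simp add: continuous_on_def)
  hence l1: "(u \<longlongrightarrow> u p) (at_right p)" using at_within_Icc_at_right[OF pq] by simp
  have "(u \<longlongrightarrow> u q) (at q within {p..q})" using cont pq by (simp add: continuous_on_def)
  hence l2: "(u \<longlongrightarrow> u q) (at_left q)" using at_within_Icc_at_left[OF pq] by simp
  have lt1: "eventually (\<lambda>t. u t < 1) (at_right p)" using ev1 by eventually_elim (use lt in auto)
  have lt2: "eventually (\<lambda>t. u t < 1) (at_left q)" using ev2 by eventually_elim (use lt in auto)
  have "u p \<le> 1" using tendsto_upperbound[OF l1 eventually_mono[OF lt1]] by auto
  moreover have "u p \<noteq> 1"
  proof
    assume "u p = 1"
    thus False using bad[OF _ ev1 tendsto_imp_filterlim_at_left[OF _ lt1]] l1 by auto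
  qed
  moreover have "u q \<le> 1" using tendsto_upperbound[OF l2 eventually_mono[OF lt2]] by auto
  moreover have "u q \<noteq> 1"
  proof
    assume "u q = 1"
    thus False using bad[OF _ ev2 tendsto_imp_filterlim_at_left[OF _ lt2]] l2 by auto
  qed
  ultimately show ?thesis by auto
qed

lemma stay: assumes pq: "p < q"
  and d: "\<And>t. t \<in> {p..q} \<Longrightarrow> (u has_real_derivative c (u t)) (at t within {p..q})"
  and up: "1 \<le> u p"
  shows "1 \<le> u q"
proof (rule ccontr)
  assume uq: "\<not> 1 \<le> u q"
  have cont: "continuous_on {p..q} u" by (rule DERIV_continuous_on[OF d])
  define Z where "Z = {p..q} \<inter> u -` {1..}"
  have "closed Z" unfolding Z_def by (intro continuous_closed_preimage cont) auto
  hence "compact Z" using compact_Int_closed[of "{p..q}" Z] by (simp add: Z_def Int_assoc)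
  moreover have "p \<in> Z" using up pq by (auto simp: Z_def)
  ultimately have "compact Z" "Z \<noteq> {}" by auto
  then obtain p' where p': "p' \<in> Z" "\<And>t. t \<in> Z \<Longrightarrow> t \<le> p'"
    using compact_attains_sup[of Z] by auto
  have p'Z: "1 \<le> u p'" "p \<le> p'" "p' \<le> q" using p'(1) unfolding Z_def by auto
  have "p' \<noteq> q" using p'Z(1) uq by auto
  hence p'q: "p' < q" using p'Z by linarith
  have "u p' < 1 \<and> u q < 1"
  proof (rule endp[OF p'q])
    fix t assume "t \<in> {p'..q}"
    thus "(u has_real_derivative c (u t)) (at t within {p'..q})"
      using p'Z by (intro DERIV_subset[OF d]) auto
  next
    fix t assume t: "p' < t" "t < q"
    show "u t < 1"
    proof (rule ccontr)
      assume "\<not> u t < 1"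
      hence "t \<in> Z" using t p'Z unfolding Z_def by auto
      thus False using p'(2)[of t] t by auto
    qed
  qed
  thus False using p'Z by auto
qed

lemma noreach: assumes pq: "p < q"
  and d: "\<And>t. t \<in> {p..q} \<Longrightarrow> (u has_real_derivative c (u t)) (at t within {p..q})"
  and up: "u p < 1"
  shows "u q < 1"
proof (rule ccontr)
  assume uq: "\<not> u q < 1"
  have cont: "continuous_on {p..q} u" by (rule DERIV_continuous_on[OF d])
  define Z where "Z = {p..q} \<inter> u -` {1..}"
  have "closed Z" unfolding Z_def by (intro continuous_closed_preimage cont) auto
  hence "compact Z" using compact_Int_closed[of "{p..q}" Z] by (simp add: Z_def Int_assoc)
  moreover have "q \<in> Z" using uq pq by (auto simp: Z_def)
  ultimately have "compact Z" "Z \<noteq> {}" by auto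
  then obtain q' where q': "q' \<in> Z" "\<And>t. t \<in> Z \<Longrightarrow> q' \<le> t"
    using compact_attains_inf[of Z] by auto
  have q'Z: "1 \<le> u q'" "p \<le> q'" "q' \<le> q" using q'(1) unfolding Z_def by auto
  have "q' \<noteq> p" using q'Z(1) up by auto
  hence pq': "p < q'" using q'Z by linarith
  have "u p < 1 \<and> u q' < 1"
  proof (rule endp[OF pq'])
    fix t assume "t \<in> {p..q'}"
    thus "(u has_real_derivative c (u t)) (at t within {p..q'})"
      using q'Z by (intro DERIV_subset[OF d]) auto
  next
    fix t assume t: "p < t" "t < q'"
    show "u t < 1"
    proof (rule ccontr)
      assume "\<not> u t < 1"
      hence "t \<in> Z" using t q'Z unfolding Z_def by auto
      thus False using q'(2)[of t] t by auto
    qed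
  qed
  thus False using q'Z by auto
qed

lemma equal: assumes
      du: "\<And>t. 0 \<le> t \<Longrightarrow> (u has_real_derivative c (u t)) (at t within {0..})"
  and dv: "\<And>t. 0 \<le> t \<Longrightarrow> (v has_real_derivative c (v t)) (at t within {0..})"
  and lu: "\<And>t. 0 \<le> t \<Longrightarrow> u t < 1" and lv: "\<And>t. 0 \<le> t \<Longrightarrow> v t < 1"
  and e0: "u 0 = v 0" and t1: "0 \<le> t1"
  shows "u t1 = v t1"
proof -
  have du': "(u has_real_derivative c (u t)) (at t within {0..t1})" if "t \<in> {0..t1}" for t
    using that by (intro DERIV_subset[OF du]) auto
  have dv': "(v has_real_derivative c (v t)) (at t within {0..t1})" if "t \<in> {0..t1}" for t
    using that by (intro DERIV_subset[OF dv]) auto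
  obtain m1 where m1: "\<And>t. t \<in> {0..t1} \<Longrightarrow> m1 < u t"
    using lowb[OF DERIV_continuous_on[OF du'] t1] by blast
  obtain m2 where m2: "\<And>t. t \<in> {0..t1} \<Longrightarrow> m2 < v t"
    using lowb[OF DERIV_continuous_on[OF dv'] t1] by blast
  define m where "m = min m1 m2"
  obtain K1 where K1: "\<And>t. t \<in> {0..t1} \<Longrightarrow> T m (u t) - t = K1"
    using T_const[of "{0..t1}" m u] du' m1 lu by (force simp: m_def)
  obtain K2 where K2: "\<And>t. t \<in> {0..t1} \<Longrightarrow> T m (v t) - t = K2"
    using T_const[of "{0..t1}" m v] dv' m2 lv by (force simp: m_def)
  have "T m (u t1) = T m (v t1)" using K1[of 0] K2[of 0] K1[of t1] K2[of t1] t1 e0 by auto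
  thus ?thesis using T_inj[of m "u t1" "v t1"] m1[of t1] m2[of t1] lu lv t1 by (force simp: m_def)
qed
end


lemma snd_int: "set_integrable lborel A std_normal_density" if "A \<in> sets borel"
  unfolding set_integrable_def using that
  by (intro integrable_mult_indicator) auto

lemma Phi_diff: assumes "a \<le> b" shows "Phi b - Phi a = (LBINT t=a..b. std_normal_density t)"
proof -
  have "{..b} = {..a} \<union> {a<..b}" using assms by auto
  have "Phi b = (LBINT t:{..a}. std_normal_density t) + (LBINT t:{a<..b}. std_normal_density t)"
    unfolding Phi_def \<open>{..b} = _\<close>
    by (rule set_integral_Un) (auto intro!: snd_int)
  thus ?thesis using interval_integral_Ioc[OF assms, of std_normal_density] unfolding Phi_def by simp
qed

lemma Phi_eq: "Phi u = Phi c + (LBINT t=c..u. std_normal_density t)"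
proof (cases "c \<le> u")
  case True thus ?thesis using Phi_diff[OF True] by simp
next
  case False thus ?thesis using Phi_diff[of u c] interval_integral_endpoints_reverse[where a=c and b=u and f=std_normal_density]
    by linarith
qed

lemma Phi_deriv: "(Phi has_real_derivative std_normal_density x) (at x)"
proof -
  have "((\<lambda>u. LBINT y=x..u. std_normal_density y) has_vector_derivative std_normal_density x)
     (at x within {x-1..x+1})"
    by (rule interval_integral_FTC2) (auto intro!: continuous_intros simp: std_normal_density_def)
  hence "((\<lambda>u. LBINT y=x..u. std_normal_density y) has_real_derivative std_normal_density x) (at x)"
    by (simp add: has_real_derivative_iff_has_vector_derivative at_within_Icc_at)
  hence "((\<lambda>u. Phi x + (LBINT y=x..u. std_normal_density y)) has_real_derivative std_normal_density x) (at x)"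
    by (auto intro!: derivative_eq_intros)
  moreover have "(\<lambda>u. Phi x + (LBINT y=x..u. std_normal_density y)) = Phi"
    using Phi_eq[of _ x] by (intro ext) (rule sym)
  ultimately show ?thesis by simp
qed

lemma Phi_deriv' [derivative_intros]:
  "(g has_real_derivative g') (at x within s) \<Longrightarrow> ((\<lambda>x. Phi (g x)) has_real_derivative std_normal_density (g x) * g') (at x within s)"
  using DERIV_chain2[OF Phi_deriv] by (simp add: mult.commute)

lemma Phi_top: "(Phi \<longlongrightarrow> 1) at_top"
proof -
  have "((\<lambda>y. \<integral> x. indicator {.. y} x *\<^sub>R std_normal_density x \<partial>lborel) \<longlongrightarrow> \<integral> x. std_normal_density x \<partial>lborel) at_top"
    by (rule tendsto_integral_at_top) auto
  thus ?thesis unfolding Phi_def set_lebesgue_integral_def by simp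
qed

lemma Phi_bot: "(Phi \<longlongrightarrow> 0) at_bot"
proof -
  have p4: "AE x in lborel. ((\<lambda>i. indicator {..- i} x *\<^sub>R std_normal_density x) \<longlongrightarrow> (0::real)) at_top"
    proof (intro AE_I2 tendsto_eventually)
      fix x :: real
      show "\<forall>\<^sub>F i in at_top. indicator {..- i} x *\<^sub>R std_normal_density x = 0"
        using eventually_gt_at_top[of "-x"] by eventually_elim (auto simp: indicator_def)
    qed
  have p5: "\<forall>\<^sub>F i in at_top. AE x in lborel. norm (indicator {..- i} x *\<^sub>R std_normal_density x) \<le> std_normal_density x"
      by (intro always_eventually allI AE_I2) (auto simp: indicator_def)
  have "((\<lambda>t. integral\<^sup>L lborel (\<lambda>x. indicator {..-t} x *\<^sub>R std_normal_density x)) \<longlongrightarrow> integral\<^sup>L lborel (\<lambda>x. 0::real)) at_top"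
    using integral_dominated_convergence_at_top[of "\<lambda>x. 0" lborel "\<lambda>t x. indicator {..-t} x *\<^sub>R std_normal_density x" std_normal_density, OF _ _ _ p4 p5]
    by simp
  hence "((\<lambda>t. Phi (-t)) \<longlongrightarrow> 0) at_top" unfolding Phi_def set_lebesgue_integral_def by simp
  thus ?thesis by (simp add: filterlim_at_bot_mirror)
qed


abbreviation "phi \<equiv> std_normal_density"

lemma phi_fun: "phi = (\<lambda>x. (1 / sqrt (2 * pi)) * exp (- x\<^sup>2 / 2))"
  by (rule ext) (simp add: std_normal_density_def)

lemma phi_deriv: "(phi has_real_derivative (- x * phi x)) (at x)"
proof -
  have "((\<lambda>x. exp (- x\<^sup>2 / 2)) has_real_derivative exp (- x\<^sup>2 / 2) * (- x)) (at x)"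
    by (auto intro!: derivative_eq_intros simp: power2_eq_square)
  from DERIV_cmult[OF this, of "1 / sqrt (2 * pi)"] show ?thesis
    unfolding phi_fun by (simp add: mult_ac)
qed

lemma phi_pos: "0 < phi x" by (rule normal_density_pos) simp

lemma phi_even: "phi (- x) = phi x" by (simp add: std_normal_density_def)

lemma phi_le1: "phi x \<le> 1"
proof -
  have "exp (- x\<^sup>2 / 2) \<le> 1" by simp
  moreover have "1 / sqrt (2 * pi) \<le> 1" using pi_gt3 by (simp add: divide_simps real_le_rsqrt)
  ultimately show ?thesis unfolding std_normal_density_def
    by (metis mult_le_one exp_ge_zero zero_le_divide_1_iff real_sqrt_ge_zero zero_le_mult_iff
              mult_nonneg_nonneg le_less_linear pi_gt_zero zero_le_numeral less_imp_le)
qed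

lemma phi_top: "(phi \<longlongrightarrow> 0) at_top"
  unfolding std_normal_density_def by real_asymp

lemma phi_bot: "(phi \<longlongrightarrow> 0) at_bot"
  unfolding std_normal_density_def by real_asymp

lemma Phi_isCont: "isCont Phi x" using Phi_deriv by (rule DERIV_isCont)

lemma Phi_cont [continuous_intros]: "continuous_on S g \<Longrightarrow> continuous_on S (\<lambda>x. Phi (g x))"
  using continuous_on_compose2[of UNIV Phi S g] Phi_isCont
  by (simp add: continuous_at_imp_continuous_on)

lemma Phi_strict: "x < y \<Longrightarrow> Phi x < Phi y"
  by (rule DERIV_pos_imp_increasing) (auto intro!: exI Phi_deriv phi_pos)

lemma Phi_nonneg: "0 \<le> Phi x"
proof -
  have "0 \<le> Phi x"
    by (rule tendsto_upperbound[OF Phi_bot]) 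
       (auto intro!: eventually_mono[OF eventually_le_at_bot[of x]] simp: less_eq_real_def Phi_strict)
  thus ?thesis .
qed

lemma Phi_le1: "Phi x \<le> 1"
  by (rule tendsto_lowerbound[OF Phi_top])
     (auto intro!: eventually_mono[OF eventually_ge_at_top[of x]] simp: less_eq_real_def Phi_strict)

lemma Phi_neg_top: "((\<lambda>y. Phi (- y)) \<longlongrightarrow> 0) at_top"
  using Phi_bot by (simp add: filterlim_at_bot_mirror)

lemma mills: assumes y: "0 < y" shows "Phi (- y) \<le> phi y / y"
proof -
  define h where "h y = phi y / y - Phi (- y)" for y
  have dec: "h b < h a" if "0 < a" "a < b" for a b
  proof (rule DERIV_neg_imp_decreasing[OF that(2)])
    fix x assume x: "a \<le> x" "x \<le> b"
    hence x0: "x \<noteq> 0" "0 < x" using that by auto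
    have "(h has_real_derivative ((- x * phi x) * x - phi x) / x\<^sup>2 - phi (- x) * (- 1)) (at x)"
      unfolding h_def using x0
      by (auto intro!: derivative_eq_intros phi_deriv simp: power2_eq_square)
    moreover have "((- x * phi x) * x - phi x) / x\<^sup>2 - phi (- x) * (- 1) = - phi x / x\<^sup>2"
      using x0 by (simp add: phi_even field_simps power2_eq_square)
    moreover have "- phi x / x\<^sup>2 < 0" using phi_pos[of x] x0 by (simp add: divide_neg_pos)
    ultimately show "\<exists>d. (h has_real_derivative d) (at x) \<and> d < 0" by auto
  qed
  have lim: "(h \<longlongrightarrow> 0) at_top"
  proof -
    have "((\<lambda>y. phi y / y) \<longlongrightarrow> 0) at_top"
      unfolding std_normal_density_def by real_asymp
    thus ?thesis unfolding h_def using tendsto_diff[OF _ Phi_neg_top] by fastforce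
  qed
  have "0 \<le> h y"
    by (rule tendsto_upperbound[OF lim])
       (auto intro!: eventually_mono[OF eventually_ge_at_top[of y]] simp: less_eq_real_def dec y)
  thus ?thesis by (simp add: h_def)
qed

definition psi :: "real \<Rightarrow> real" where "psi z = z * Phi z + phi z"

lemma psi_pos: "0 < psi z"
proof -
  have psi_d: "(psi has_real_derivative Phi x) (at x)" for x
  proof -
    have "(psi has_real_derivative (1 * Phi x + x * phi x + (- x * phi x))) (at x)"
      unfolding psi_def[abs_def] by (auto intro!: derivative_eq_intros phi_deriv Phi_deriv)
    thus ?thesis by simp
  qed
  have inc: "psi a < psi b" if "a < b" for a b
    using that
  proof (rule DERIV_pos_imp_increasing)
    fix x show "\<exists>d. (psi has_real_derivative d) (at x) \<and> 0 < d"
      using psi_d Phi_nonneg[of "x - 1"] Phi_strict[of "x - 1" x] by force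
  qed
  have lim: "(psi \<longlongrightarrow> 0) at_bot"
  proof -
    have a: "((\<lambda>y. y * Phi (- y)) \<longlongrightarrow> 0) at_top"
    proof (rule tendsto_sandwich[OF _ _ tendsto_const phi_top])
      show "\<forall>\<^sub>F n in at_top. 0 \<le> n * Phi (- n)"
        using eventually_ge_at_top[of 0] by eventually_elim (simp add: Phi_nonneg)
      show "\<forall>\<^sub>F n in at_top. n * Phi (- n) \<le> phi n"
        using eventually_gt_at_top[of 0]
      proof eventually_elim
        case (elim n) thus ?case using mills[OF elim] by (simp add: field_simps)
      qed
    qed
    have "((\<lambda>y. psi (- y)) \<longlongrightarrow> 0) at_top"
    proof -
      have "((\<lambda>y. - (y * Phi (- y)) + phi y) \<longlongrightarrow> - 0 + 0) at_top"
        by (intro tendsto_intros a phi_top)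
      thus ?thesis by (simp add: psi_def phi_even)
    qed
    thus ?thesis by (simp add: filterlim_at_bot_mirror)
  qed
  have "0 \<le> psi (z - 1)"
    by (rule tendsto_upperbound[OF lim])
       (auto intro!: eventually_mono[OF eventually_le_at_bot[of "z - 1"]] simp: less_eq_real_def inc)
  thus ?thesis using inc[of "z - 1" z] by simp
qed


definition Fx :: "real \<Rightarrow> real \<Rightarrow> real" where
  "Fx x l = (1 - 2*x) * exp (l\<^sup>2 * (x - 1)) * Phi (l * (1 - 2*x) / sqrt (2*x)) + Phi (- l / sqrt (2*x))"

lemma A_Fx: "0 < x \<Longrightarrow> A_l l x = 2 * l\<^sup>2 * Fx x l"
  unfolding A_l_def Gamma_l_def D_l_def Fx_def by (simp add: algebra_simps)

lemma key_id: assumes x: "0 < x"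
  shows "exp (l\<^sup>2 * (x - 1)) * phi (l * (1 - 2*x) / sqrt (2*x)) = phi (- l / sqrt (2*x))"
proof -
  have s2: "(sqrt (2*x))\<^sup>2 = 2*x" using x by simp
  have e1: "(l * (1 - 2*x) / sqrt (2*x))\<^sup>2 = l\<^sup>2 * (1 - 2*x)\<^sup>2 / (2*x)"
    by (simp add: power_divide power_mult_distrib s2)
  have e2: "(- l / sqrt (2*x))\<^sup>2 = l\<^sup>2 / (2*x)"
    by (simp add: power_divide s2)
  have e3: "l\<^sup>2 * (x - 1) + - (l\<^sup>2 * (1 - 2*x)\<^sup>2 / (2*x)) / 2 = - (l\<^sup>2 / (2*x)) / 2"
    using x by (simp add: field_simps power2_eq_square)
  show ?thesis unfolding std_normal_density_def e1 e2
    using e3 by (simp add: mult.left_commute exp_add[symmetric])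
qed

lemma alg: fixes ee pp q s x l :: real assumes s: "0 < s" "s * s = 2 * x"
  shows "(1 - 2 * x) * (ee * (2 * l * (x - 1)) * pp + q * ((1 - 2 * x) / s) * ee) + ee * q * (- 1 / s) = 2 * (x - 1) * ee * s * (l * (1 - 2 * x) / s * pp + q)"
proof -
  have x: "x = s * s / 2" using s by simp
  show ?thesis unfolding x using s(1) by (simp add: field_simps)
qed

lemma F_deriv: assumes x: "0 < x"
  shows "(Fx x has_real_derivative
     2 * (x - 1) * exp (l\<^sup>2 * (x - 1)) * sqrt (2*x) * psi (l * (1 - 2*x) / sqrt (2*x))) (at l)"
proof -
  define s where "s = sqrt (2*x)"
  have s: "0 < s" "s * s = 2 * x" using x by (auto simp: s_def)
  define E where "E l = exp (l\<^sup>2 * (x - 1))" for l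
  define P where "P l = Phi (l * (1 - 2*x) / s)" for l
  define Q where "Q l = Phi (- l / s)" for l
  have FE: "Fx x = (\<lambda>l. (1 - 2*x) * (E l * P l) + Q l)"
    by (rule ext) (simp add: Fx_def E_def P_def Q_def s_def mult_ac)
  have d1: "(E has_real_derivative E l * (2 * l * (x - 1))) (at l)"
    unfolding E_def[abs_def] by (auto intro!: derivative_eq_intros simp: power2_eq_square)
  have lin: "((\<lambda>l. l * (1 - 2*x) / s) has_real_derivative (1 - 2*x) / s) (at l)"
  proof -
    have "(\<lambda>l. l * (1 - 2*x) / s) = (\<lambda>l. ((1 - 2*x) / s) * l)" by (rule ext) simp
    thus ?thesis using DERIV_cmult[OF DERIV_ident, of "(1-2*x)/s" l] by simp
  qed
  have d2: "(P has_real_derivative phi (l * (1 - 2*x) / s) * ((1 - 2*x) / s)) (at l)"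
    unfolding P_def[abs_def] by (rule DERIV_chain2[OF Phi_deriv lin])
  have lin2: "((\<lambda>l. - l / s) has_real_derivative - 1 / s) (at l)"
  proof -
    have "(\<lambda>l. - l / s) = (\<lambda>l. (- 1 / s) * l)" by (rule ext) simp
    thus ?thesis using DERIV_cmult[OF DERIV_ident, of "- 1 / s" l] by simp
  qed
  have d3: "(Q has_real_derivative phi (- l / s) * (- 1 / s)) (at l)"
    unfolding Q_def[abs_def] by (rule DERIV_chain2[OF Phi_deriv lin2])
  have "(Fx x has_real_derivative (1 - 2*x) * (E l * (2 * l * (x - 1)) * P l + phi (l * (1 - 2*x) / s) * ((1 - 2*x) / s) * E l)
      + phi (- l / s) * (- 1 / s)) (at l)"
    unfolding FE by (intro DERIV_add DERIV_cmult DERIV_mult d1 d2 d3)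
  moreover have kid: "E l * phi (l * (1 - 2*x) / s) = phi (- l / s)"
    unfolding E_def s_def by (rule key_id[OF x])
  moreover have "(1 - 2*x) * (E l * (2 * l * (x - 1)) * P l + phi (l * (1 - 2*x) / s) * ((1 - 2*x) / s) * E l)
      + phi (- l / s) * (- 1 / s) =
      2 * (x - 1) * E l * s * psi (l * (1 - 2*x) / s)"
  proof -
    define q where "q = phi (l * (1 - 2*x) / s)"
    have kq: "phi (- l / s) = E l * q" using kid by (simp add: q_def)
    show ?thesis unfolding psi_def kq q_def[symmetric] P_def[symmetric]
      by (rule alg[OF s])
  qed
  ultimately show ?thesis by (simp add: E_def s_def)
qed


lemma F_lim: assumes x: "0 < x" "x \<noteq> 1" shows "(Fx x \<longlongrightarrow> 0) at_top"
proof -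
  define s where "s = sqrt (2 * x)"
  have s: "0 < s" "s * s = 2 * x" using x by (auto simp: s_def)
  define T where "T l = (1 - 2 * x) * exp (l\<^sup>2 * (x - 1)) * Phi (l * (1 - 2 * x) / s)" for l
  have FT: "Fx x l = T l + Phi (- l / s)" for l by (simp add: Fx_def T_def s_def)
  have lin: "filterlim (\<lambda>l. (- 1 / s) * l) at_bot at_top"
    using s by (intro filterlim_tendsto_neg_mult_at_bot[OF tendsto_const _ filterlim_ident]) auto
  have "((\<lambda>l. Phi ((- 1 / s) * l)) \<longlongrightarrow> 0) at_top"
    by (rule filterlim_compose[OF Phi_bot lin])
  hence Q: "((\<lambda>l. Phi (- l / s)) \<longlongrightarrow> 0) at_top" by simp
  have Tlim: "(T \<longlongrightarrow> 0) at_top"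
  proof (cases "x < 1")
    case True
    have sq: "filterlim (\<lambda>l::real. l\<^sup>2) at_top at_top" by real_asymp
    have "filterlim (\<lambda>l. (x - 1) * l\<^sup>2) at_bot at_top"
      using True by (intro filterlim_tendsto_neg_mult_at_bot[OF tendsto_const _ sq]) auto
    hence "((\<lambda>l. exp ((x - 1) * l\<^sup>2)) \<longlongrightarrow> 0) at_top"
      by (rule filterlim_compose[OF exp_at_bot])
    hence "((\<lambda>l. \<bar>1 - 2 * x\<bar> * exp (l\<^sup>2 * (x - 1))) \<longlongrightarrow> 0) at_top"
      by (intro tendsto_mult_right_zero) (simp add: mult.commute)
    moreover have "\<forall>\<^sub>F l in at_top. norm (T l) \<le> \<bar>1 - 2 * x\<bar> * exp (l\<^sup>2 * (x - 1))"
    proof (intro always_eventually allI)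
      fix l
      have "norm (T l) = \<bar>1 - 2 * x\<bar> * exp (l\<^sup>2 * (x - 1)) * Phi (l * (1 - 2 * x) / s)"
        by (simp add: T_def abs_mult Phi_nonneg)
      also have "\<dots> \<le> \<bar>1 - 2 * x\<bar> * exp (l\<^sup>2 * (x - 1)) * 1"
        by (intro mult_left_mono Phi_le1) auto
      finally show "norm (T l) \<le> \<bar>1 - 2 * x\<bar> * exp (l\<^sup>2 * (x - 1))" by simp
    qed
    ultimately show ?thesis by (rule Lim_null_comparison[rotated])
  next
    case False
    hence x1: "1 < x" using x by auto
    have "((\<lambda>l. s / l) \<longlongrightarrow> 0) at_top"
      by (intro tendsto_divide_0[OF tendsto_const] filterlim_at_top_imp_at_infinity filterlim_ident)
    moreover have "\<forall>\<^sub>F l in at_top. norm (T l) \<le> s / l"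
      using eventually_gt_at_top[of 0]
    proof eventually_elim
      case (elim l)
      define y where "y = l * (2 * x - 1) / s"
      have y: "0 < y" using elim x1 s by (auto simp: y_def)
      have "l * (1 - 2 * x) = - (l * (2 * x - 1))" by (simp add: algebra_simps)
      hence z: "l * (1 - 2 * x) / s = - y" by (simp add: y_def)
      have e: "exp (l\<^sup>2 * (x - 1)) * phi y = phi (- l / sqrt (2 * x))"
        using key_id[OF x(1), of l] by (simp add: z s_def[symmetric] phi_even)
      have "norm (T l) = (2 * x - 1) * (exp (l\<^sup>2 * (x - 1)) * Phi (- y))"
        using x1 by (simp add: T_def z abs_mult Phi_nonneg)
      also have "\<dots> \<le> (2 * x - 1) * (exp (l\<^sup>2 * (x - 1)) * (phi y / y))"
        using x1 by (intro mult_left_mono mills y) auto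
      also have "\<dots> = (2 * x - 1) * (phi (- l / sqrt (2 * x)) / y)"
        unfolding e[symmetric] by simp
      also have "\<dots> \<le> (2 * x - 1) * (1 / y)"
        using x1 y by (intro mult_left_mono divide_right_mono phi_le1) auto
      also have "\<dots> = s / l" using x1 elim s by (simp add: y_def field_simps)
      finally show ?case .
    qed
    ultimately show ?thesis by (rule Lim_null_comparison[rotated])
  qed
  have "Fx x = (\<lambda>l. T l + Phi (- l / s))" using FT by (intro ext) simp
  thus ?thesis using tendsto_add[OF Tlim Q] by simp
qed

lemma F_pos: assumes x: "0 < x" "x < 1" shows "0 < Fx x l"
proof -
  have dec: "Fx x b < Fx x a" if "a < b" for a b
  proof (rule DERIV_neg_imp_decreasing[OF that])
    fix t
    have "2 * (x - 1) * exp (t\<^sup>2 * (x - 1)) * sqrt (2 * x) * psi (t * (1 - 2 * x) / sqrt (2 * x)) < 0"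
      using x psi_pos[of "t * (1 - 2 * x) / sqrt (2 * x)"] by (simp add: mult_less_0_iff zero_less_mult_iff)
    thus "\<exists>y. (Fx x has_real_derivative y) (at t) \<and> y < 0" using F_deriv[OF x(1)] by blast
  qed
  have "0 \<le> Fx x (l + 1)"
    by (rule tendsto_upperbound[OF F_lim[of x]])
       (use x in \<open>auto intro!: eventually_mono[OF eventually_ge_at_top[of "l+1"]] simp: less_eq_real_def dec\<close>)
  thus ?thesis using dec[of l "l+1"] by simp
qed

lemma F_neg: assumes x: "1 < x" shows "Fx x l < 0"
proof -
  have x0: "0 < x" using x by simp
  have inc: "Fx x a < Fx x b" if "a < b" for a b
  proof (rule DERIV_pos_imp_increasing[OF that])
    fix t
    have "0 < 2 * (x - 1) * exp (t\<^sup>2 * (x - 1)) * sqrt (2 * x) * psi (t * (1 - 2 * x) / sqrt (2 * x))"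
      using x psi_pos by (intro mult_pos_pos) auto
    thus "\<exists>y. (Fx x has_real_derivative y) (at t) \<and> 0 < y" using F_deriv[OF x0] by blast
  qed
  have "Fx x (l + 1) \<le> 0"
    by (rule tendsto_lowerbound[OF F_lim[of x]])
       (use x in \<open>auto intro!: eventually_mono[OF eventually_ge_at_top[of "l+1"]] simp: less_eq_real_def inc\<close>)
  thus ?thesis using inc[of l "l+1"] by simp
qed

lemma A_pos: assumes "0 < l" "0 \<le> x" "x < 1" shows "0 < A_l l x"
proof (cases "x = 0")
  case True thus ?thesis using assms by (simp add: A_l_def)
next
  case False thus ?thesis using assms F_pos[of x l] by (simp add: A_Fx)
qed

lemma A_neg: assumes "0 < l" "1 < x" shows "A_l l x < 0"
  using assms F_neg[of x l] by (simp add: A_Fx mult_pos_neg)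

lemma A_one: "A_l l 1 = 0"
  by (simp add: A_Fx Fx_def)


lemma at0_eq: "at (0::real) within {0..} = at_right 0"
proof -
  have "{0::real..} - {0} = {0<..}" by auto
  thus ?thesis by (simp add: at_within_def)
qed

lemma A_cont: assumes l: "0 < l" shows "continuous_on {0..} (A_l l)"
proof -
  define Af where "Af x = 2 * l\<^sup>2 * Fx x l" for x
  have Af_cont: "continuous_on {0<..} Af"
    unfolding Af_def[abs_def] Fx_def by (intro continuous_intros) auto
  have "continuous_on {0<..} (A_l l)"
    using Af_cont by (rule continuous_on_cong[THEN iffD1, rotated 2]) (auto simp: Af_def A_Fx)
  hence isc: "isCont (A_l l) x" if "0 < x" for x
    using that by (simp add: continuous_on_eq_continuous_at)
  have lim0: "(A_l l \<longlongrightarrow> A_l l 0) (at_right 0)"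
  proof -
    have sq: "((\<lambda>x. sqrt (2 * x)) \<longlongrightarrow> 0) (at_right (0::real))"
    proof -
      have "((\<lambda>x. sqrt (2 * x)) \<longlongrightarrow> sqrt (2 * 0)) (at_right (0::real))"
        by (intro tendsto_intros)
      thus ?thesis by simp
    qed
    have sqp: "eventually (\<lambda>x. 0 < sqrt (2 * x)) (at_right (0::real))"
      using eventually_at_right_less[of "0::real"] by eventually_elim simp
    have inv: "filterlim (\<lambda>x. inverse (sqrt (2 * x))) at_top (at_right (0::real))"
      by (rule filterlim_inverse_at_top[OF sq sqp])
    have c1: "((\<lambda>x. l * (1 - 2 * x)) \<longlongrightarrow> l * (1 - 2 * 0)) (at_right (0::real))"
      by (intro tendsto_intros)
    have z1: "filterlim (\<lambda>x. l * (1 - 2 * x) * inverse (sqrt (2 * x))) at_top (at_right 0)"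
      using c1 l by (intro filterlim_tendsto_pos_mult_at_top[OF _ _ inv]) auto
    have z2: "filterlim (\<lambda>x. (- l) * inverse (sqrt (2 * x))) at_bot (at_right 0)"
      using l by (intro filterlim_tendsto_neg_mult_at_bot[OF tendsto_const _ inv]) auto
    have p1: "((\<lambda>x. Phi (l * (1 - 2 * x) * inverse (sqrt (2 * x)))) \<longlongrightarrow> 1) (at_right 0)"
      by (rule filterlim_compose[OF Phi_top z1])
    have p2: "((\<lambda>x. Phi ((- l) * inverse (sqrt (2 * x)))) \<longlongrightarrow> 0) (at_right 0)"
      by (rule filterlim_compose[OF Phi_bot z2])
    have "((\<lambda>x. 2 * l\<^sup>2 * ((1 - 2 * x) * exp (l\<^sup>2 * (x - 1)) * Phi (l * (1 - 2 * x) * inverse (sqrt (2 * x)))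
        + Phi ((- l) * inverse (sqrt (2 * x))))) \<longlongrightarrow>
        2 * l\<^sup>2 * ((1 - 2 * 0) * exp (l\<^sup>2 * (0 - 1)) * 1 + 0)) (at_right 0)"
      by (intro tendsto_intros p1 p2)
    hence "((\<lambda>x. 2 * l\<^sup>2 * Fx x l) \<longlongrightarrow> A_l l 0) (at_right 0)"
      by (simp add: Fx_def A_l_def divide_inverse)
    moreover have "eventually (\<lambda>x. 2 * l\<^sup>2 * Fx x l = A_l l x) (at_right (0::real))"
      using eventually_at_right_less[of "0::real"] by eventually_elim (simp add: A_Fx)
    ultimately show ?thesis by (rule Lim_transform_eventually)
  qed
  show ?thesis unfolding continuous_on_eq_continuous_within
  proof
    fix x :: real assume "x \<in> {0..}"
    show "continuous (at x within {0..}) (A_l l)"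
    proof (cases "x = 0")
      case True thus ?thesis using lim0 by (simp add: continuous_within at0_eq)
    next
      case False thus ?thesis using \<open>x \<in> {0..}\<close> isc[of x] by (simp add: continuous_at_imp_continuous_at_within)
    qed
  qed
qed

lemma A_lip: assumes l: "0 < l"
  shows "\<exists>L \<delta>. 0 < L \<and> 0 < \<delta> \<and> (\<forall>y. \<bar>y - 1\<bar> < \<delta> \<longrightarrow> \<bar>A_l l y\<bar> \<le> L * \<bar>y - 1\<bar>)"
proof -
  define f where "f x = 2 * l\<^sup>2 * Fx x l" for x
  have "\<exists>D. (f has_real_derivative D) (at 1)"
    unfolding f_def[abs_def] Fx_def
    apply (rule exI)
    apply (rule derivative_eq_intros refl | simp)+
    done
  then obtain D where D: "(f has_real_derivative D) (at 1)" by blast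
  have f1: "f 1 = 0" using A_one[of l] A_Fx[of 1 l] by (simp add: f_def)
  have "((\<lambda>y. (f y - f 1) / (y - 1)) \<longlongrightarrow> D) (at 1)"
    using D by (simp add: has_field_derivative_iff)
  hence "eventually (\<lambda>y. dist ((f y - f 1) / (y - 1)) D < 1) (at 1)"
    by (rule tendstoD) simp
  then obtain d where d: "0 < d" "\<And>y. y \<noteq> 1 \<Longrightarrow> dist y 1 < d \<Longrightarrow> dist ((f y - f 1) / (y - 1)) D < 1"
    unfolding eventually_at by auto
  define \<delta> where "\<delta> = min d (1/2)"
  show ?thesis
  proof (intro exI conjI allI impI)
    show "0 < \<bar>D\<bar> + 1" by simp
    show "0 < \<delta>" using d by (simp add: \<delta>_def)
    fix y :: real assume y: "\<bar>y - 1\<bar> < \<delta>"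
    show "\<bar>A_l l y\<bar> \<le> (\<bar>D\<bar> + 1) * \<bar>y - 1\<bar>"
    proof (cases "y = 1")
      case True thus ?thesis by (simp add: A_one)
    next
      case False
      have "\<bar>y - 1\<bar> < 1/2" using y by (simp add: \<delta>_def)
      hence y0: "0 < y" by linarith
      have "dist (f y / (y - 1)) D < 1" using d(2)[OF False] y f1 by (auto simp: dist_real_def \<delta>_def)
      hence h: "\<bar>f y / (y - 1) - D\<bar> < 1" by (simp only: dist_real_def)
      have "\<bar>f y / (y - 1)\<bar> \<le> \<bar>D\<bar> + 1" using h by arith
      hence "\<bar>f y\<bar> / \<bar>y - 1\<bar> \<le> \<bar>D\<bar> + 1" by (simp add: abs_divide)
      hence "\<bar>f y\<bar> \<le> (\<bar>D\<bar> + 1) * \<bar>y - 1\<bar>" using False by (simp add: divide_le_eq)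
      thus ?thesis using y0 by (simp add: f_def A_Fx)
    qed
  qed
qed


lemma gens: assumes l: "0 < l"
  shows "\<exists>L \<delta>. gen (\<lambda>y. A_l l (max y 0)) L \<delta> \<and> gen (\<lambda>y. - A_l l (2 - y)) L \<delta>"
proof -
  obtain L \<delta> where L: "0 < L" "0 < \<delta>" "\<And>y. \<bar>y - 1\<bar> < \<delta> \<Longrightarrow> \<bar>A_l l y\<bar> \<le> L * \<bar>y - 1\<bar>"
    using A_lip[OF l] by blast
  define d where "d = min \<delta> 1"
  have d: "0 < d" "d \<le> \<delta>" "d \<le> 1" using L by (auto simp: d_def)
  have ac: "continuous_on {0..} (A_l l)" by (rule A_cont[OF l])
  have g1: "gen (\<lambda>y. A_l l (max y 0)) L d"
  proof
    show "continuous_on {..<1} (\<lambda>y. A_l l (max y 0))"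
      by (rule continuous_on_compose2[OF ac]) (auto intro!: continuous_intros)
    show "\<And>y. y < 1 \<Longrightarrow> 0 < A_l l (max y 0)" using A_pos[OF l] by simp
    show "0 < L" "0 < d" using L d by auto
    fix y :: real assume y: "1 - d < y" "y < 1"
    hence "0 \<le> y" "\<bar>y - 1\<bar> < \<delta>" using d by auto
    thus "A_l l (max y 0) \<le> L * (1 - y)" using L(3)[of y] y by auto
  qed
  have g2: "gen (\<lambda>y. - A_l l (2 - y)) L d"
  proof
    show "continuous_on {..<1} (\<lambda>y. - A_l l (2 - y))"
      by (intro continuous_intros continuous_on_compose2[OF ac]) (auto intro!: continuous_intros)
    show "\<And>y. y < 1 \<Longrightarrow> 0 < - A_l l (2 - y)" using A_neg[OF l] by simp
    show "0 < L" "0 < d" using L d by auto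
    fix y :: real assume y: "1 - d < y" "y < 1"
    hence "\<bar>(2 - y) - 1\<bar> < \<delta>" using d by auto
    thus "- A_l l (2 - y) \<le> L * (1 - y)" using L(3)[of "2 - y"] y by auto
  qed
  show ?thesis using g1 g2 by blast
qed

lemma sol_base: assumes "is_pos_solution l S0 S" "0 \<le> t"
  shows "0 \<le> S t" "(S has_real_derivative A_l l (S t)) (at t within {0..})"
  using assms unfolding is_pos_solution_def by blast+

lemma sol_d1: assumes "is_pos_solution l S0 S" "0 \<le> p" "t \<in> {p..q}"
  shows "(S has_real_derivative A_l l (max (S t) 0)) (at t within {p..q})"
proof -
  have t: "0 \<le> t" using assms(2,3) by simp
  have m: "max (S t) 0 = S t" using sol_base(1)[OF assms(1) t] by simp
  show ?thesis unfolding m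
    by (rule DERIV_subset[OF sol_base(2)[OF assms(1) t]]) (use assms(2) in auto)
qed

lemma sol_d2: assumes "is_pos_solution l S0 S" "0 \<le> p" "t \<in> {p..q}"
  shows "((\<lambda>t. 2 - S t) has_real_derivative - A_l l (2 - (2 - S t))) (at t within {p..q})"
proof -
  have t: "0 \<le> t" using assms(2,3) by simp
  have "(S has_real_derivative A_l l (S t)) (at t within {p..q})"
    by (rule DERIV_subset[OF sol_base(2)[OF assms(1) t]]) (use assms(2) in auto)
  hence "((\<lambda>t. 2 - S t) has_real_derivative 0 - A_l l (S t)) (at t within {p..q})"
    by (intro DERIV_diff DERIV_const)
  thus ?thesis by simp
qed

lemma sol_d1': assumes "is_pos_solution l S0 S" "0 \<le> t"
  shows "(S has_real_derivative A_l l (max (S t) 0)) (at t within {0..})"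
proof -
  have m: "max (S t) 0 = S t" using sol_base(1)[OF assms] by simp
  show ?thesis unfolding m by (rule sol_base(2)[OF assms])
qed

lemma sol_d2': assumes "is_pos_solution l S0 S" "0 \<le> t"
  shows "((\<lambda>t. 2 - S t) has_real_derivative - A_l l (2 - (2 - S t))) (at t within {0..})"
proof -
  have "((\<lambda>t. 2 - S t) has_real_derivative 0 - A_l l (S t)) (at t within {0..})"
    by (intro DERIV_diff DERIV_const sol_base(2)[OF assms])
  thus ?thesis by simp
qed

lemma uniq: assumes l: "0 < l" and S1: "is_pos_solution l S0 S1" and S2: "is_pos_solution l S0 S2"
  and t: "0 \<le> t"
  shows "S1 t = S2 t"
proof -
  obtain L \<delta> where g1: "gen (\<lambda>y. A_l l (max y 0)) L \<delta>" and g2: "gen (\<lambda>y. - A_l l (2 - y)) L \<delta>"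
    using gens[OF l] by blast
  interpret g1: gen "\<lambda>y. A_l l (max y 0)" L \<delta> by (rule g1)
  interpret g2: gen "\<lambda>y. - A_l l (2 - y)" L \<delta> by (rule g2)
  have i0: "S1 0 = S0" "S2 0 = S0" using S1 S2 by (auto simp: is_pos_solution_def)
  consider "S0 < 1" | "S0 = 1" | "1 < S0" by linarith
  thus ?thesis
  proof cases
    case 1
    have lt: "S t < 1" if S: "is_pos_solution l S0 S" and t: "0 \<le> t" for S t
    proof (cases "t = 0")
      case True thus ?thesis using S 1 by (simp add: is_pos_solution_def)
    next
      case False
      show ?thesis
        by (rule g1.noreach[of 0 t S]) (use t False S 1 sol_d1[OF S] in \<open>auto simp: is_pos_solution_def\<close>)
    qed
    show ?thesis
      by (rule g1.equal[of S1 S2]) (use S1 S2 t lt sol_d1' i0 in auto)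
  next
    case 2
    have eq1: "S t = 1" if S: "is_pos_solution l S0 S" and t: "0 \<le> t" for S t
    proof (cases "t = 0")
      case True thus ?thesis using S 2 by (simp add: is_pos_solution_def)
    next
      case False
      have "1 \<le> S t"
        by (rule g1.stay[of 0 t S]) (use t False S 2 sol_d1[OF S] in \<open>auto simp: is_pos_solution_def\<close>)
      moreover have "1 \<le> 2 - S t"
        by (rule g2.stay[of 0 t "\<lambda>t. 2 - S t"]) (use t False S 2 sol_d2[OF S] in \<open>auto simp: is_pos_solution_def\<close>)
      ultimately show ?thesis by simp
    qed
    show ?thesis using eq1[OF S1 t] eq1[OF S2 t] by simp
  next
    case 3
    have lt: "2 - S t < 1" if S: "is_pos_solution l S0 S" and t: "0 \<le> t" for S t
    proof (cases "t = 0")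
      case True thus ?thesis using S 3 by (simp add: is_pos_solution_def)
    next
      case False
      show ?thesis
        by (rule g2.noreach[of 0 t "\<lambda>t. 2 - S t"]) (use t False S 3 sol_d2[OF S] in \<open>auto simp: is_pos_solution_def\<close>)
    qed
    have "2 - S1 t = 2 - S2 t"
      by (rule g2.equal[of "\<lambda>t. 2 - S1 t" "\<lambda>t. 2 - S2 t"]) (use S1 S2 t lt sol_d2' i0 in auto)
    thus ?thesis by simp
  qed
qed

lemma exS: assumes l: "0 < l" and S0: "0 \<le> S0"
  shows "\<exists>S. is_pos_solution l S0 S \<and> (S \<longlongrightarrow> 1) at_top \<and> (\<forall>t\<ge>0. 0 \<le> S t \<and> S t \<le> max S0 1)"
proof -
  obtain L \<delta> where g1: "gen (\<lambda>y. A_l l (max y 0)) L \<delta>" and g2: "gen (\<lambda>y. - A_l l (2 - y)) L \<delta>"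
    using gens[OF l] by blast
  interpret g1: gen "\<lambda>y. A_l l (max y 0)" L \<delta> by (rule g1)
  interpret g2: gen "\<lambda>y. - A_l l (2 - y)" L \<delta> by (rule g2)
  consider "S0 < 1" | "S0 = 1" | "1 < S0" by linarith
  thus ?thesis
  proof cases
    case 1
    then obtain R where R: "R 0 = S0" "\<And>t. 0 \<le> t \<Longrightarrow> S0 \<le> R t \<and> R t < 1 \<and>
        (R has_real_derivative A_l l (max (R t) 0)) (at t)" "(R \<longlongrightarrow> 1) at_top"
      using g1.exist[of S0] by blast
    have "is_pos_solution l S0 R"
      unfolding is_pos_solution_def
    proof (intro conjI allI impI)
      fix t :: real assume t: "0 \<le> t"
      show "0 \<le> R t" using R(2)[OF t] S0 by linarith
      have "max (R t) 0 = R t" using R(2)[OF t] S0 by linarith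
      thus "(R has_real_derivative A_l l (R t)) (at t within {0..})"
        using R(2)[OF t] by (auto intro: has_field_derivative_at_within)
    qed (rule R(1))
    moreover have "\<forall>t\<ge>0. 0 \<le> R t \<and> R t \<le> max S0 1" using R(2) S0 by force
    ultimately show ?thesis using R(3) by blast
  next
    case 2
    have "is_pos_solution l S0 (\<lambda>t. 1)"
      unfolding is_pos_solution_def using 2 A_one[of l] by (auto intro: DERIV_const)
    thus ?thesis using 2 by (intro exI[of _ "\<lambda>t. 1"]) auto
  next
    case 3
    then obtain R where R: "R 0 = 2 - S0" "\<And>t. 0 \<le> t \<Longrightarrow> 2 - S0 \<le> R t \<and> R t < 1 \<and>
        (R has_real_derivative - A_l l (2 - R t)) (at t)" "(R \<longlongrightarrow> 1) at_top"
      using g2.exist[of "2 - S0"] by auto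
    define S where "S t = 2 - R t" for t
    have "is_pos_solution l S0 S"
      unfolding is_pos_solution_def
    proof (intro conjI allI impI)
      show "S 0 = S0" using R(1) by (simp add: S_def)
      fix t :: real assume t: "0 \<le> t"
      show "0 \<le> S t" using R(2)[OF t] by (simp add: S_def)
      have "((\<lambda>t. 2 - R t) has_real_derivative 0 - - A_l l (2 - R t)) (at t)"
        using R(2)[OF t] by (intro DERIV_diff DERIV_const) auto
      thus "(S has_real_derivative A_l l (S t)) (at t within {0..})"
        by (auto simp: S_def[abs_def] intro: has_field_derivative_at_within)
    qed
    moreover have "\<forall>t\<ge>0. 0 \<le> S t \<and> S t \<le> max S0 1" using R(2) 3 by (force simp: S_def)
    moreover have "(S \<longlongrightarrow> 1) at_top"
      using tendsto_diff[OF tendsto_const[of 2] R(3)] by (simp add: S_def[abs_def])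
    ultimately show ?thesis by blast
  qed
qed

theorem theorem4p1:
  fixes l S0 :: real
  assumes "l > 0" and "S0 \<ge> 0"
  shows "\<exists>S. is_pos_solution l S0 S
     \<and> (\<forall>S'. is_pos_solution l S0 S' \<longrightarrow> (\<forall>t\<ge>0. S' t = S t))
     \<and> bounded (S ` {0..})
     \<and> continuous_on {0..} (\<lambda>t. A_l l (S t))
     \<and> (S \<longlongrightarrow> 1) at_top
     \<and> (\<forall>t\<ge>0. 0 \<le> S t \<and> S t \<le> max S0 1)"
proof -
  obtain S where S: "is_pos_solution l S0 S" "(S \<longlongrightarrow> 1) at_top" "\<forall>t\<ge>0. 0 \<le> S t \<and> S t \<le> max S0 1"
    using exS[OF assms] by blast
  have un: "\<forall>S'. is_pos_solution l S0 S' \<longrightarrow> (\<forall>t\<ge>0. S' t = S t)"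
  proof (intro allI impI)
    fix S' :: "real \<Rightarrow> real" and t :: real
    assume h: "is_pos_solution l S0 S'" "0 \<le> t"
    show "S' t = S t" by (rule uniq[OF assms(1) h(1) S(1) h(2)])
  qed
  have bd: "bounded (S ` {0..})"
  proof (rule bounded_subset[OF bounded_closed_interval[of 0 "max S0 1"]])
    show "S ` {0..} \<subseteq> {0..max S0 1}"
    proof
      fix y assume "y \<in> S ` {0..}"
      then obtain t where "t \<in> {0..}" "y = S t" by blast
      thus "y \<in> {0..max S0 1}" using S(3) by simp
    qed
  qed
  have Sc: "continuous_on {0..} S"
    using S(1) unfolding is_pos_solution_def by (intro DERIV_continuous_on) auto
  have sub: "S ` {0..} \<subseteq> {0..}"
  proof
    fix y assume "y \<in> S ` {0..}"
    then obtain t where "t \<in> {0..}" "y = S t" by blast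
    thus "y \<in> {0..}" using S(3) by simp
  qed
  have Ac: "continuous_on {0..} (\<lambda>t. A_l l (S t))"
    by (rule continuous_on_compose2[OF A_cont[OF assms(1)] Sc sub])
  show ?thesis
    apply (rule exI[of _ S])
    apply (intro conjI)
         apply (rule S(1))
        apply (rule un)
       apply (rule bd)
      apply (rule Ac)
     apply (rule S(2))
    apply (rule S(3))
    done
qed


end
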